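(* Let $M$ be a smooth second countable manifold and $(\mathcal M,G)$ the manifold of Riemannian metrics on $M$ with $G_g(h,k)=\int_M\operatorname{tr}(g^{-1}hg^{-1}k)\operatorname{vol}(g)$. Let $g(t)$ be a geodesic in $\mathcal M$ and $\xi$ a smooth vector field along $g$. Then $\xi$ satisfies the Jacobi equation $\nabla_{\partial_t}\nabla_{\partial_t}\xi=R(\xi,g_t)g_t$ if and only if $$\begin{aligned}\xi_{tt}&=-g_tg^{-1}\xi g^{-1}g_t+g_tg^{-1}\xi_t+\xi_tg^{-1}g_t+\tfrac12\operatorname{tr}(g^{-1}g_tg^{-1}\xi_t)g-\tfrac12\operatorname{tr}(g^{-1}g_tg^{-1}g_tg^{-1}\xi)g\\&\quad+\tfrac12\operatorname{tr}(g^{-1}g_tg^{-1}\xi)g_t-\tfrac12\operatorname{tr}(g^{-1}\xi_t)g_t+\tfrac14\operatorname{tr}(g^{-1}g_tg^{-1}g_t)\xi-\tfrac12\operatorname{tr}(g^{-1}g_t)\xi_t.\end{aligned}$$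
   Context: $T\mathcal M=\mathcal M\times\mathcal D(S^2T^*M)$, $\mathcal D$ denoting compactly supported symmetric 2-tensor fields viewed as maps $TM\to T^*M$; a vector field along $g$ is a curve $\xi(t)\in\mathcal D(S^2T^*M)$, and subscripts $t$ denote $t$-derivatives. The Levi-Civita connection has Christoffel symbol $\Gamma_g(h,k)=\tfrac12hg^{-1}k+\tfrac12kg^{-1}h+\tfrac14\operatorname{tr}(g^{-1}hg^{-1}k)g-\tfrac14\operatorname{tr}(g^{-1}h)k-\tfrac14\operatorname{tr}(g^{-1}k)h$, with $\nabla_{\partial_t}\xi=\xi_t-\Gamma_g(g_t,\xi)$; geodesics satisfy $g_{tt}=\Gamma_g(g_t,g_t)$; and the curvature is $R_g(h,k)\ell=d\Gamma(h)(k,\ell)-d\Gamma(k)(h,\ell)-\Gamma_g(h,\Gamma_g(k,\ell))+\Gamma_g(k,\Gamma_g(h,\ell))$, where $d\Gamma(h)$ is the derivative of $g\mapsto\Gamma_g$ in direction $h$. *)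

theory Defs
  imports "HOL-Analysis.Analysis"
begin

(* Pointwise (fibrewise) objects: a symmetric 2-tensor at a point of M, written
   in a frame of T_xM, is a matrix real^'n^'n viewed as a map T M -> T^*M. *)

type_synonym 'n mat = "real^'n^'n"

definition sym_mat :: "'n::finite mat \<Rightarrow> bool" where
  "sym_mat A \<longleftrightarrow> transpose A = A"

definition pos_def_sym :: "'n::finite mat \<Rightarrow> bool" where
  "pos_def_sym A \<longleftrightarrow> sym_mat A \<and> (\<forall>v. v \<noteq> 0 \<longrightarrow> v \<bullet> (A *v v) > 0)"

definition Gam :: "'n::finite mat \<Rightarrow> 'n mat \<Rightarrow> 'n mat \<Rightarrow> 'n mat" where
  "Gam g h k =
     (1/2) *\<^sub>R (h ** matrix_inv g ** k) + (1/2) *\<^sub>R (k ** matrix_inv g ** h)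
   + (1/4 * trace (matrix_inv g ** h ** matrix_inv g ** k)) *\<^sub>R g
   - (1/4 * trace (matrix_inv g ** h)) *\<^sub>R k
   - (1/4 * trace (matrix_inv g ** k)) *\<^sub>R h"

definition dGam :: "'n::finite mat \<Rightarrow> 'n mat \<Rightarrow> 'n mat \<Rightarrow> 'n mat \<Rightarrow> 'n mat" where
  "dGam g h k l = vector_derivative (\<lambda>s. Gam (g + s *\<^sub>R h) k l) (at 0)"

definition Rm :: "'n::finite mat \<Rightarrow> 'n mat \<Rightarrow> 'n mat \<Rightarrow> 'n mat \<Rightarrow> 'n mat" where
  "Rm g h k l = dGam g h k l - dGam g k h l - Gam g h (Gam g k l) + Gam g k (Gam g h l)"

definition vd :: "(real \<Rightarrow> 'a::real_normed_vector) \<Rightarrow> real \<Rightarrow> 'a" where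
  "vd c t = vector_derivative c (at t)"

definition cov :: "(real \<Rightarrow> 'n::finite mat) \<Rightarrow> (real \<Rightarrow> 'n mat) \<Rightarrow> real \<Rightarrow> 'n mat" where
  "cov c X t = vd X t - Gam (c t) (vd c t) (X t)"

definition smooth_curve :: "real set \<Rightarrow> (real \<Rightarrow> 'a::real_normed_vector) \<Rightarrow> bool" where
  "smooth_curve I c \<longleftrightarrow> (\<exists>D :: nat \<Rightarrow> real \<Rightarrow> 'a. D 0 = c \<and>
      (\<forall>k. \<forall>t\<in>I. (D k has_vector_derivative D (Suc k) t) (at t)))"

definition cs_sym_field :: "('m::topological_space \<Rightarrow> 'n::finite mat) \<Rightarrow> bool" where
  "cs_sym_field h \<longleftrightarrow> (\<forall>x. sym_mat (h x)) \<and> compact (closure {x. h x \<noteq> 0})"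

end

theory Submission
  imports Defs
begin

lemma bilinear_mm: "bilinear ((**) :: real^'n::finite^'m::finite \<Rightarrow> real^'p::finite^'n \<Rightarrow> real^'p^'m)"
  unfolding bilinear_def linear_iff
  by (auto simp: vec_eq_iff matrix_matrix_mult_def sum.distrib algebra_simps sum_distrib_left)

lemma bb_mm: "bounded_bilinear ((**) :: real^'n::finite^'m::finite \<Rightarrow> real^'p::finite^'n \<Rightarrow> real^'p^'m)"
  using bilinear_mm bilinear_conv_bounded_bilinear by blast

lemma trace_scaleR: "trace (r *\<^sub>R (A::real^'n::finite^'n)) = r * trace A"
  by (simp add: trace_def sum_distrib_left)

lemma trace_zero[simp]: "trace (0::real^'n::finite^'n) = 0"
  by (simp add: trace_def)

lemma trace_minus: "trace (- (A::real^'n::finite^'n)) = - trace A"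
  by (simp add: trace_def sum_negf)

lemma bl_trace: "bounded_linear (trace :: real^'n::finite^'n \<Rightarrow> real)"
proof -
  have "linear (trace :: real^'n::finite^'n \<Rightarrow> real)"
    by (rule linearI) (simp_all add: trace_add trace_scaleR)
  then show ?thesis using linear_conv_bounded_linear by blast
qed

lemma tendsto_det:
  fixes c :: "'a \<Rightarrow> real^'n::finite^'n"
  assumes "(c \<longlongrightarrow> A) F"
  shows "((\<lambda>s. det (c s)) \<longlongrightarrow> det A) F"
  unfolding det_def by (intro tendsto_intros assms)

lemma inv_props:
  fixes A :: "real^'n::finite^'n"
  assumes "invertible A"
  shows "A ** matrix_inv A = mat 1" "matrix_inv A ** A = mat 1"
proof -
  have "A ** matrix_inv A = mat 1 \<and> matrix_inv A ** A = mat 1"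
    using assms unfolding matrix_inv_def invertible_def by (rule someI_ex)
  then show "A ** matrix_inv A = mat 1" "matrix_inv A ** A = mat 1" by auto
qed

definition cram :: "real^'n::finite^'n \<Rightarrow> real^'n^'n" where
  "cram A = (\<chi> k j. det (\<chi> i l. if l = k then (if i = j then 1 else 0) else A$i$l) / det A)"

lemma matrix_inv_cramer:
  fixes A :: "real^'n::finite^'n"
  assumes "det A \<noteq> 0"
  shows "matrix_inv A = cram A"
proof -
  have inv: "invertible A" using assms invertible_det_nz by blast
  have "(matrix_inv A) $ k $ j = cram A $ k $ j" for k j
  proof -
    let ?x = "\<chi> k. (matrix_inv A) $ k $ j"
    let ?b = "\<chi> i. if i = j then 1 else (0::real)"
    have "A *v ?x = ?b"
      using inv_props(1)[OF inv]
      by (simp add: vec_eq_iff matrix_vector_mult_def matrix_matrix_mult_def mat_def)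
    then have "?x = (\<chi> k. det(\<chi> i l. if l=k then ?b$i else A$i$l) / det A)"
      using cramer[OF assms] by blast
    then show ?thesis unfolding cram_def by (simp add: vec_eq_iff cong: if_cong)
  qed
  then show ?thesis by (simp add: vec_eq_iff)
qed


lemma tendsto_cram:
  fixes c :: "'a \<Rightarrow> real^'n::finite^'n"
  assumes "(c \<longlongrightarrow> A) F" "det A \<noteq> 0"
  shows "((\<lambda>s. cram (c s)) \<longlongrightarrow> cram A) F"
  unfolding cram_def
proof (intro tendsto_intros assms(2))
  fix k j :: 'n
  show "((\<lambda>s. det (\<chi> i l. if l = k then (if i = j then 1 else 0) else c s $ i $ l)) \<longlongrightarrow>
          det (\<chi> i l. if l = k then (if i = j then 1 else 0) else A $ i $ l)) F"
  proof (intro tendsto_det tendsto_intros)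
    fix i l :: 'n
    show "((\<lambda>s. if l = k then (if i = j then 1 else 0) else c s $ i $ l) \<longlongrightarrow>
           (if l = k then (if i = j then 1 else 0) else A $ i $ l)) F"
      by (cases "l = k") (auto intro!: tendsto_intros assms(1))
  qed
qed (rule tendsto_det[OF assms(1)])

lemma tendsto_matrix_inv:
  fixes c :: "'a \<Rightarrow> real^'n::finite^'n"
  assumes "(c \<longlongrightarrow> A) F" "invertible A"
  shows "((\<lambda>s. matrix_inv (c s)) \<longlongrightarrow> matrix_inv A) F"
proof -
  have d: "det A \<noteq> 0" using assms(2) invertible_det_nz by blast
  have ev: "eventually (\<lambda>s. det (c s) \<noteq> 0) F"
    using tendsto_imp_eventually_ne[OF tendsto_det[OF assms(1)] d] .
  have e: "eventually (\<lambda>s. cram (c s) = matrix_inv (c s)) F"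
    using ev by eventually_elim (simp add: matrix_inv_cramer)
  have l: "((\<lambda>s. cram (c s)) \<longlongrightarrow> matrix_inv A) F"
    using tendsto_cram[OF assms(1) d] by (simp add: matrix_inv_cramer[OF d])
  show ?thesis by (rule Lim_transform_eventually[OF l e])
qed

lemma hvd_iff:
  fixes f :: "real \<Rightarrow> 'a::real_normed_vector"
  shows "(f has_vector_derivative f') (at t) \<longleftrightarrow> ((\<lambda>s. (f s - f t) /\<^sub>R (s - t)) \<longlongrightarrow> f') (at t)"
proof -
  have bl: "bounded_linear (\<lambda>x. x *\<^sub>R f')" by (rule bounded_linear_scaleR_left)
  have eq: "eventually (\<lambda>y. norm (((f y - f t) - (y - t) *\<^sub>R f') /\<^sub>R norm (y - t))
             = norm ((f y - f t) /\<^sub>R (y - t) - f')) (at t)"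
  proof -
    have "norm (((f y - f t) - (y - t) *\<^sub>R f') /\<^sub>R norm (y - t))
             = norm ((f y - f t) /\<^sub>R (y - t) - f')" if "y \<noteq> t" for y
    proof -
      have "((f y - f t) - (y - t) *\<^sub>R f') = (y - t) *\<^sub>R ((f y - f t) /\<^sub>R (y - t) - f')"
        using that by (simp add: scaleR_diff_right)
      then show ?thesis using that by (simp add: abs_mult)
    qed
    then show ?thesis by (auto simp: eventually_at_filter)
  qed
  have "(f has_vector_derivative f') (at t) \<longleftrightarrow>
     ((\<lambda>y. (((f y - f t) - (y - t) *\<^sub>R f') /\<^sub>R norm (y - t))) \<longlongrightarrow> 0) (at t)"
    unfolding has_vector_derivative_def has_derivative_at_within[where s=UNIV, simplified]
    using bl by simp
  also have "\<dots> \<longleftrightarrow> ((\<lambda>y. norm (((f y - f t) - (y - t) *\<^sub>R f') /\<^sub>R norm (y - t))) \<longlongrightarrow> 0) (at t)"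
    by (rule tendsto_norm_zero_iff[symmetric])
  also have "\<dots> \<longleftrightarrow> ((\<lambda>y. norm ((f y - f t) /\<^sub>R (y - t) - f')) \<longlongrightarrow> 0) (at t)"
    using eq by (rule tendsto_cong)
  also have "\<dots> \<longleftrightarrow> ((\<lambda>s. (f s - f t) /\<^sub>R (s - t)) \<longlongrightarrow> f') (at t)"
    by (simp add: tendsto_norm_zero_iff Lim_null[symmetric])
  finally show ?thesis .
qed

lemma inv_deriv:
  fixes c :: "real \<Rightarrow> real^'n::finite^'n"
  assumes d: "(c has_vector_derivative c') (at t)" and inv: "invertible (c t)"
  shows "((\<lambda>s. matrix_inv (c s)) has_vector_derivative - (matrix_inv (c t) ** c' ** matrix_inv (c t))) (at t)"
proof -
  interpret bb: bounded_bilinear "(**) :: real^'n^'n \<Rightarrow> real^'n^'n \<Rightarrow> real^'n^'n" by (rule bb_mm)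
  have ct: "(c \<longlongrightarrow> c t) (at t)"
    using has_vector_derivative_continuous[OF d] by (simp add: continuous_at)
  have dt: "det (c t) \<noteq> 0" using inv invertible_det_nz by blast
  have ev: "eventually (\<lambda>s. invertible (c s)) (at t)"
    using tendsto_imp_eventually_ne[OF tendsto_det[OF ct] dt] by (simp add: invertible_det_nz)
  have Bc: "((\<lambda>s. matrix_inv (c s)) \<longlongrightarrow> matrix_inv (c t)) (at t)"
    by (rule tendsto_matrix_inv[OF ct inv])
  have dq: "((\<lambda>s. (c s - c t) /\<^sub>R (s - t)) \<longlongrightarrow> c') (at t)" using d hvd_iff by blast
  have lim: "((\<lambda>s. - (matrix_inv (c s) ** ((c s - c t) /\<^sub>R (s - t)) ** matrix_inv (c t)))
      \<longlongrightarrow> - (matrix_inv (c t) ** c' ** matrix_inv (c t))) (at t)"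
    by (intro tendsto_minus bb.tendsto Bc dq tendsto_const)
  have "eventually (\<lambda>s. - (matrix_inv (c s) ** ((c s - c t) /\<^sub>R (s - t)) ** matrix_inv (c t))
      = (matrix_inv (c s) - matrix_inv (c t)) /\<^sub>R (s - t)) (at t)"
    using ev
  proof eventually_elim
    case (elim s)
    have "matrix_inv (c s) ** (c s - c t) ** matrix_inv (c t)
       = matrix_inv (c s) ** c s ** matrix_inv (c t) - matrix_inv (c s) ** (c t ** matrix_inv (c t))"
      by (simp add: bb.diff_right bb.diff_left matrix_mul_assoc)
    also have "\<dots> = matrix_inv (c t) - matrix_inv (c s)"
      using inv_props[OF elim] inv_props[OF inv] by simp
    moreover have "matrix_inv (c s) ** ((c s - c t) /\<^sub>R (s - t)) ** matrix_inv (c t)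
       = (matrix_inv (c s) ** (c s - c t) ** matrix_inv (c t)) /\<^sub>R (s - t)"
      by (simp only: bb.scaleR_left bb.scaleR_right)
    ultimately show ?case
      by (metis minus_diff_eq scaleR_minus_right)
  qed
  with lim have "((\<lambda>s. (matrix_inv (c s) - matrix_inv (c t)) /\<^sub>R (s - t))
      \<longlongrightarrow> - (matrix_inv (c t) ** c' ** matrix_inv (c t))) (at t)"
    by (rule Lim_transform_eventually)
  then show ?thesis using hvd_iff by blast
qed


lemma hvd_mm:
  fixes f :: "real \<Rightarrow> real^'n::finite^'n"
  assumes "(f has_vector_derivative f') (at t)" "(g has_vector_derivative g') (at t)"
  shows "((\<lambda>s. f s ** g s) has_vector_derivative (f t ** g' + f' ** g t)) (at t)"
  by (rule bounded_bilinear.has_vector_derivative[OF bb_mm assms])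

lemma hvd_cscale:
  fixes f :: "real \<Rightarrow> real^'n::finite^'n"
  assumes "(f has_vector_derivative f') (at t)"
  shows "((\<lambda>s. r *\<^sub>R f s) has_vector_derivative (r *\<^sub>R f')) (at t)"
  by (rule bounded_linear.has_vector_derivative[OF bounded_linear_scaleR_right assms])

lemma hvd_trace_scale:
  fixes A M :: "real \<Rightarrow> real^'n::finite^'n"
  assumes "(A has_vector_derivative A') (at t)" "(M has_vector_derivative M') (at t)"
  shows "((\<lambda>s. (r * trace (A s)) *\<^sub>R M s) has_vector_derivative
            ((r * trace (A t)) *\<^sub>R M' + (r * trace A') *\<^sub>R M t)) (at t)"
proof -
  have "((\<lambda>s. trace (A s)) has_vector_derivative trace A') (at t)"
    by (rule bounded_linear.has_vector_derivative[OF bl_trace assms(1)])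
  then have "((\<lambda>s. r * trace (A s)) has_field_derivative r * trace A') (at t)"
    by (intro DERIV_cmult) (simp add: has_real_derivative_iff_has_vector_derivative)
  from has_vector_derivative_scaleR[OF this assms(2)] show ?thesis .
qed

definition GD :: "'n::finite mat \<Rightarrow> 'n mat \<Rightarrow> 'n mat \<Rightarrow> 'n mat \<Rightarrow> 'n mat \<Rightarrow> 'n mat \<Rightarrow> 'n mat" where
  "GD g c' h h' k k' = (let Gi = matrix_inv g; Gd = - (Gi ** c' ** Gi) in
     (1/2) *\<^sub>R (h ** Gd ** k + h' ** Gi ** k + h ** Gi ** k')
   + (1/2) *\<^sub>R (k ** Gd ** h + k' ** Gi ** h + k ** Gi ** h')
   + (1/4 * trace (Gd ** h ** Gi ** k + Gi ** h' ** Gi ** k + Gi ** h ** Gd ** k + Gi ** h ** Gi ** k')) *\<^sub>R g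
   + (1/4 * trace (Gi ** h ** Gi ** k)) *\<^sub>R c'
   - (1/4 * trace (Gd ** h + Gi ** h')) *\<^sub>R k - (1/4 * trace (Gi ** h)) *\<^sub>R k'
   - (1/4 * trace (Gd ** k + Gi ** k')) *\<^sub>R h - (1/4 * trace (Gi ** k)) *\<^sub>R h')"

lemma Gam_deriv:
  fixes c h k :: "real \<Rightarrow> real^'n::finite^'n"
  assumes c: "(c has_vector_derivative c') (at t)" and h: "(h has_vector_derivative h') (at t)"
    and k: "(k has_vector_derivative k') (at t)" and inv: "invertible (c t)"
  shows "((\<lambda>s. Gam (c s) (h s) (k s)) has_vector_derivative GD (c t) c' (h t) h' (k t) k') (at t)"
proof -
  interpret bb: bounded_bilinear "(**) :: real^'n^'n \<Rightarrow> real^'n^'n \<Rightarrow> real^'n^'n" by (rule bb_mm)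
  have Gi: "((\<lambda>s. matrix_inv (c s)) has_vector_derivative - (matrix_inv (c t) ** c' ** matrix_inv (c t))) (at t)"
    by (rule inv_deriv[OF c inv])
  show ?thesis
    unfolding Gam_def
    apply (rule has_vector_derivative_eq_rhs)
     apply ((rule has_vector_derivative_diff has_vector_derivative_add hvd_cscale hvd_trace_scale hvd_mm c h k Gi)+)[1]
    apply (simp add: GD_def Let_def bb.add_left bb.add_right bb.minus_left bb.minus_right trace_add
       bb.diff_left bb.diff_right trace_sub trace_minus
       matrix_mul_assoc algebra_simps scaleR_left_distrib scaleR_left_diff_distrib)
    done
qed


lemma GD_split:
  fixes g :: "real^'n::finite^'n"
  shows "GD g c' h h' k k' = GD g c' h 0 k 0 + Gam g h' k + Gam g h k'"
proof -
  interpret bb: bounded_bilinear "(**) :: real^'n^'n \<Rightarrow> real^'n^'n \<Rightarrow> real^'n^'n" by (rule bb_mm)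
  show ?thesis
    by (simp add: GD_def Gam_def Let_def bb.add_left bb.add_right bb.minus_left bb.minus_right trace_add
       bb.diff_left bb.diff_right trace_sub trace_minus
       matrix_mul_assoc algebra_simps scaleR_left_distrib scaleR_left_diff_distrib)
qed

lemma dGam_GD:
  fixes g :: "real^'n::finite^'n"
  assumes "invertible g"
  shows "dGam g X h k = GD g X h 0 k 0"
proof -
  have c: "((\<lambda>s. g + s *\<^sub>R X) has_vector_derivative X) (at 0)"
    by (auto intro!: derivative_eq_intros)
  have "((\<lambda>s. Gam (g + s *\<^sub>R X) ((\<lambda>_. h) s) ((\<lambda>_. k) s)) has_vector_derivative
          GD (g + 0 *\<^sub>R X) X h 0 k 0) (at 0)"
    by (rule Gam_deriv[OF c has_vector_derivative_const has_vector_derivative_const]) (simp add: assms)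
  then show ?thesis unfolding dGam_def by (simp add: vector_derivative_at)
qed

lemma Gam_sym:
  fixes g :: "real^'n::finite^'n"
  shows "Gam g h k = Gam g k h"
proof -
  have "trace (matrix_inv g ** h ** matrix_inv g ** k) = trace (matrix_inv g ** k ** matrix_inv g ** h)"
    using trace_mul_sym[of "matrix_inv g ** h" "matrix_inv g ** k"] by (simp add: matrix_mul_assoc)
  then show ?thesis unfolding Gam_def by (simp add: algebra_simps)
qed

lemma dGam_sym: "dGam g c h k = dGam g c k h"
  unfolding dGam_def by (subst Gam_sym) (rule refl)

lemma Gam_diff_right:
  fixes g :: "real^'n::finite^'n"
  shows "Gam g h (k1 - k2) = Gam g h k1 - Gam g h k2"
proof -
  interpret bb: bounded_bilinear "(**) :: real^'n^'n \<Rightarrow> real^'n^'n \<Rightarrow> real^'n^'n" by (rule bb_mm)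
  show ?thesis
    by (simp add: Gam_def bb.diff_left bb.diff_right trace_sub
       matrix_mul_assoc algebra_simps scaleR_left_distrib scaleR_left_diff_distrib)
qed

lemma times2_mat: "(M::real^'n::finite^'n) * 2 = 2 *\<^sub>R M"
  by (simp add: vec_eq_iff)

lemma final_identity:
  fixes G :: "real^'n::finite^'n"
  shows "2 *\<^sub>R Gam G Gt Xt + GD G X Gt 0 Gt 0 =
    (let Gi = matrix_inv G in
            - (Gt ** Gi ** X ** Gi ** Gt) + Gt ** Gi ** Xt + Xt ** Gi ** Gt
          + (1/2 * trace (Gi ** Gt ** Gi ** Xt)) *\<^sub>R G
          - (1/2 * trace (Gi ** Gt ** Gi ** Gt ** Gi ** X)) *\<^sub>R G
          + (1/2 * trace (Gi ** Gt ** Gi ** X)) *\<^sub>R Gt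
          - (1/2 * trace (Gi ** Xt)) *\<^sub>R Gt
          + (1/4 * trace (Gi ** Gt ** Gi ** Gt)) *\<^sub>R X
          - (1/2 * trace (Gi ** Gt)) *\<^sub>R Xt)"
proof -
  interpret bb: bounded_bilinear "(**) :: real^'n^'n \<Rightarrow> real^'n^'n \<Rightarrow> real^'n^'n" by (rule bb_mm)
  define Gi where "Gi = matrix_inv G"
  have t1: "trace (Gi ** X ** Gi ** Gt ** Gi ** Gt) = trace (Gi ** Gt ** Gi ** Gt ** Gi ** X)"
    using trace_mul_sym[of "Gi ** X" "Gi ** Gt ** Gi ** Gt"] by (simp add: matrix_mul_assoc)
  have t2: "trace (Gi ** Gt ** Gi ** X ** Gi ** Gt) = trace (Gi ** Gt ** Gi ** Gt ** Gi ** X)"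
    using trace_mul_sym[of "Gi ** Gt ** Gi ** X" "Gi ** Gt"] by (simp add: matrix_mul_assoc)
  have t3: "trace (Gi ** X ** Gi ** Gt) = trace (Gi ** Gt ** Gi ** X)"
    using trace_mul_sym[of "Gi ** X" "Gi ** Gt"] by (simp add: matrix_mul_assoc)
  have t4: "trace (Gi ** Xt ** Gi ** Gt) = trace (Gi ** Gt ** Gi ** Xt)"
    using trace_mul_sym[of "Gi ** Xt" "Gi ** Gt"] by (simp add: matrix_mul_assoc)
  show ?thesis
    unfolding Gi_def[symmetric]
    by (simp add: GD_def Gam_def Let_def Gi_def[symmetric] bb.add_left bb.add_right bb.minus_left bb.minus_right trace_add
       bb.diff_left bb.diff_right trace_sub trace_minus t1 t2 t3 t4 times2_mat
       matrix_mul_assoc algebra_simps scaleR_left_distrib scaleR_left_diff_distrib)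
qed


lemma posdef_inv:
  fixes A :: "real^'n::finite^'n"
  assumes "pos_def_sym A"
  shows "invertible A"
proof -
  have "\<forall>x. A *v x = 0 \<longrightarrow> x = 0"
  proof (intro allI impI)
    fix x assume "A *v x = 0"
    then have "\<not> x \<bullet> (A *v x) > 0" by simp
    then show "x = 0" using assms unfolding pos_def_sym_def by blast
  qed
  then show ?thesis
    unfolding invertible_left_inverse matrix_left_invertible_ker .
qed

lemma smooth_facts:
  fixes c :: "real \<Rightarrow> 'a::real_normed_vector"
  assumes "smooth_curve I c" "open I" "t \<in> I"
  obtains c1 c2 where "(c has_vector_derivative c1) (at t)" "(vd c has_vector_derivative c2) (at t)"
    "vd c t = c1" "vd (vd c) t = c2"
proof -
  obtain D where D0: "D 0 = c" and D: "\<And>k t. t \<in> I \<Longrightarrow> (D k has_vector_derivative D (Suc k) t) (at t)"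
    using assms(1) unfolding smooth_curve_def by blast
  have d1: "(c has_vector_derivative D 1 t) (at t)" using D[OF assms(3), of 0] D0 by simp
  have eq: "\<And>y. y \<in> I \<Longrightarrow> D 1 y = vd c y"
  proof -
    fix y assume "y \<in> I"
    from D[OF this, of 0] D0 have "(c has_vector_derivative D 1 y) (at y)" by simp
    then show "D 1 y = vd c y" unfolding vd_def by (simp add: vector_derivative_at)
  qed
  have d2: "(vd c has_vector_derivative D 2 t) (at t)"
    using has_vector_derivative_transform_within_open[OF D[OF assms(3), of 1] assms(2) assms(3), of "vd c"] eq
    by (simp add: numeral_2_eq_2)
  show ?thesis
    by (rule that[OF d1 d2]) (simp_all add: vd_def vector_derivative_at[OF d1] vector_derivative_at[OF d2])
qed

theorem lemma4p2:
  fixes g \<xi> :: "real \<Rightarrow> 'm::{second_countable_topology, t2_space} \<Rightarrow> real^'n::finite^'n"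
    and I :: "real set"
  assumes I: "open I" "is_interval I"
    and metric: "\<forall>t\<in>I. \<forall>x. pos_def_sym (g t x)"
    and g_smooth: "\<forall>x. smooth_curve I (\<lambda>s. g s x)"
    and g_tangent: "\<forall>t\<in>I. cs_sym_field (\<lambda>x. vd (\<lambda>s. g s x) t)"
    and geodesic: "\<forall>t\<in>I. \<forall>x. vd (vd (\<lambda>s. g s x)) t
                     = Gam (g t x) (vd (\<lambda>s. g s x) t) (vd (\<lambda>s. g s x) t)"
    and xi_smooth: "\<forall>x. smooth_curve I (\<lambda>s. \<xi> s x)"
    and xi_field: "\<forall>t\<in>I. cs_sym_field (\<xi> t)"
  shows "(\<forall>t\<in>I. \<forall>x.
            cov (\<lambda>s. g s x) (cov (\<lambda>s. g s x) (\<lambda>s. \<xi> s x)) t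
          = Rm (g t x) (\<xi> t x) (vd (\<lambda>s. g s x) t) (vd (\<lambda>s. g s x) t))
    \<longleftrightarrow>
    (\<forall>t\<in>I. \<forall>x.
      (let G = g t x; Gi = matrix_inv (g t x); Gt = vd (\<lambda>s. g s x) t;
           X = \<xi> t x; Xt = vd (\<lambda>s. \<xi> s x) t
       in vd (vd (\<lambda>s. \<xi> s x)) t =
            - (Gt ** Gi ** X ** Gi ** Gt) + Gt ** Gi ** Xt + Xt ** Gi ** Gt
          + (1/2 * trace (Gi ** Gt ** Gi ** Xt)) *\<^sub>R G
          - (1/2 * trace (Gi ** Gt ** Gi ** Gt ** Gi ** X)) *\<^sub>R G
          + (1/2 * trace (Gi ** Gt ** Gi ** X)) *\<^sub>R Gt
          - (1/2 * trace (Gi ** Xt)) *\<^sub>R Gt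
          + (1/4 * trace (Gi ** Gt ** Gi ** Gt)) *\<^sub>R X
          - (1/2 * trace (Gi ** Gt)) *\<^sub>R Xt))"
proof -
  have pw: "cov (\<lambda>s. g s x) (cov (\<lambda>s. g s x) (\<lambda>s. \<xi> s x)) t
          = Rm (g t x) (\<xi> t x) (vd (\<lambda>s. g s x) t) (vd (\<lambda>s. g s x) t)
    \<longleftrightarrow>
      (let G = g t x; Gi = matrix_inv (g t x); Gt = vd (\<lambda>s. g s x) t;
           X = \<xi> t x; Xt = vd (\<lambda>s. \<xi> s x) t
       in vd (vd (\<lambda>s. \<xi> s x)) t =
            - (Gt ** Gi ** X ** Gi ** Gt) + Gt ** Gi ** Xt + Xt ** Gi ** Gt
          + (1/2 * trace (Gi ** Gt ** Gi ** Xt)) *\<^sub>R G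
          - (1/2 * trace (Gi ** Gt ** Gi ** Gt ** Gi ** X)) *\<^sub>R G
          + (1/2 * trace (Gi ** Gt ** Gi ** X)) *\<^sub>R Gt
          - (1/2 * trace (Gi ** Xt)) *\<^sub>R Gt
          + (1/4 * trace (Gi ** Gt ** Gi ** Gt)) *\<^sub>R X
          - (1/2 * trace (Gi ** Gt)) *\<^sub>R Xt)" if t: "t \<in> I" for t x
  proof -
    define gx where "gx = (\<lambda>s. g s x)"
    define xx where "xx = (\<lambda>s. \<xi> s x)"
    obtain a a2 where ga: "(gx has_vector_derivative a) (at t)" and ga2: "(vd gx has_vector_derivative a2) (at t)"
      and va: "vd gx t = a" and va2: "vd (vd gx) t = a2"
      using smooth_facts[OF g_smooth[rule_format, of x] I(1) t] unfolding gx_def by blast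
    obtain X1 X2 where xa: "(xx has_vector_derivative X1) (at t)" and xa2: "(vd xx has_vector_derivative X2) (at t)"
      and vx: "vd xx t = X1" and vx2: "vd (vd xx) t = X2"
      using smooth_facts[OF xi_smooth[rule_format, of x] I(1) t] unfolding xx_def by blast
    define G where "G = g t x"
    define X where "X = \<xi> t x"
    have gxt: "gx t = G" "xx t = X" unfolding gx_def G_def xx_def X_def by simp_all
    have inv: "invertible G" using metric t posdef_inv unfolding G_def by blast
    have geo: "a2 = Gam G a a" using geodesic t va va2 unfolding gx_def G_def by metis
    have covf: "cov gx xx = (\<lambda>s. vd xx s - Gam (gx s) (vd gx s) (xx s))"
      by (rule ext) (simp add: cov_def)
    have dcov: "(cov gx xx has_vector_derivative (X2 - GD G a a a2 X X1)) (at t)"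
      unfolding covf using has_vector_derivative_diff[OF xa2 Gam_deriv[OF ga ga2 xa]] inv gxt va
      by simp
    have L: "cov gx (cov gx xx) t = X2 - dGam G a a X - Gam G a2 X - 2 *\<^sub>R Gam G a X1 + Gam G a (Gam G a X)"
    proof -
      have "cov gx (cov gx xx) t = (X2 - GD G a a a2 X X1) - Gam G a (X1 - Gam G a X)"
        unfolding cov_def[of gx "cov gx xx"] vd_def[of "cov gx xx"] vector_derivative_at[OF dcov]
        using gxt va vx by (simp add: cov_def)
      also have "\<dots> = X2 - dGam G a a X - Gam G a2 X - 2 *\<^sub>R Gam G a X1 + Gam G a (Gam G a X)"
        by (simp add: GD_split[of G a a a2 X X1] dGam_GD[OF inv] Gam_diff_right scaleR_2 algebra_simps)
      finally show ?thesis .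
    qed
    have R: "Rm G X a a = dGam G X a a - dGam G a a X - Gam G a2 X + Gam G a (Gam G a X)"
      unfolding Rm_def geo using dGam_sym[of G a X a] Gam_sym[of G X "Gam G a a"] Gam_sym[of G X a]
      by simp
    have F: "(let Gi = matrix_inv G in
            - (a ** Gi ** X ** Gi ** a) + a ** Gi ** X1 + X1 ** Gi ** a
          + (1/2 * trace (Gi ** a ** Gi ** X1)) *\<^sub>R G
          - (1/2 * trace (Gi ** a ** Gi ** a ** Gi ** X)) *\<^sub>R G
          + (1/2 * trace (Gi ** a ** Gi ** X)) *\<^sub>R a
          - (1/2 * trace (Gi ** X1)) *\<^sub>R a
          + (1/4 * trace (Gi ** a ** Gi ** a)) *\<^sub>R X
          - (1/2 * trace (Gi ** a)) *\<^sub>R X1) = 2 *\<^sub>R Gam G a X1 + dGam G X a a"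
      using final_identity[of G a X1 X] dGam_GD[OF inv, of X a a] by simp
    have "(X2 - dGam G a a X - Gam G a2 X - 2 *\<^sub>R Gam G a X1 + Gam G a (Gam G a X)
          = dGam G X a a - dGam G a a X - Gam G a2 X + Gam G a (Gam G a X))
          \<longleftrightarrow> X2 = 2 *\<^sub>R Gam G a X1 + dGam G X a a"
      by (auto simp: algebra_simps)
    then show ?thesis
      using L R F unfolding gx_def[symmetric] xx_def[symmetric] G_def[symmetric] X_def[symmetric] va vx vx2
      by (simp add: Let_def)
  qed
  show ?thesis using pw by blast
qed

end
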